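(* Let $\mathcal{A}=\mathcal{R}*_K\mathcal{S}*_L\mathcal{T}\in\mathbb{C}^{I_1\times\cdots\times I_N\times J_1\times\cdots\times J_M}$, where $\mathcal{R}\in\mathbb{C}^{I_1\times\cdots\times I_N\times H_1\times\cdots\times H_K}$, $\mathcal{S}\in\mathbb{C}^{H_1\times\cdots\times H_K\times G_1\times\cdots\times G_L}$ and $\mathcal{T}\in\mathbb{C}^{G_1\times\cdots\times G_L\times J_1\times\cdots\times J_M}$. Then $\mathcal{A}_{\pi\dagger}=\mathcal{T}^{\dagger}*_L\mathcal{S}^{\dagger}*_K\mathcal{R}^{\dagger}$ if and only if $\mathcal{S}^{\dagger}=(\mathcal{R}^{\dagger}*_N\mathcal{A}*_M\mathcal{T}^{\dagger})^{\dagger}+\mathcal{Y}$ for some $\mathcal{Y}\in\mathbb{C}^{G_1\times\cdots\times G_L\times H_1\times\cdots\times H_K}$ satisfying $\mathcal{T}^{\dagger}*_L\mathcal{Y}*_K\mathcal{R}^{\dagger}=\mathcal{O}$ (the zero tensor).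
   Context: $\mathbb{C}^{I_1\times\cdots\times I_N}$ denotes the set of complex tensors of order $N$ and dimension $I_1\times\cdots\times I_N$. For $\mathcal{A}\in\mathbb{C}^{I_1\times\cdots\times I_N\times K_1\times\cdots\times K_N}$ and $\mathcal{B}\in\mathbb{C}^{K_1\times\cdots\times K_N\times J_1\times\cdots\times J_M}$, the Einstein product $\mathcal{A}*_N\mathcal{B}$ is defined by $(\mathcal{A}*_N\mathcal{B})_{i_1\dots i_N j_1\dots j_M}=\sum_{k_1,\dots,k_N}a_{i_1\dots i_N k_1\dots k_N}b_{k_1\dots k_N j_1\dots j_M}$; it is associative. $\mathcal{A}^H$ denotes the conjugate transpose. For $\mathcal{A}\in\mathbb{C}^{I_1\times\cdots\times I_N\times J_1\times\cdots\times J_M}$ the Moore–Penrose inverse $\mathcal{A}^{\dagger}$ is the unique $\mathcal{X}\in\mathbb{C}^{J_1\times\cdots\times J_M\times I_1\times\cdots\times I_N}$ with $\mathcal{A}*_M\mathcal{X}*_N\mathcal{A}=\mathcal{A}$, $\mathcal{X}*_N\mathcal{A}*_M\mathcal{X}=\mathcal{X}$, $(\mathcal{A}*_M\mathcal{X})^H=\mathcal{A}*_M\mathcal{X}$, $(\mathcal{X}*_N\mathcal{A})^H=\mathcal{X}*_N\mathcal{A}$. Given the factorization $\mathcal{A}=\mathcal{R}*_K\mathcal{S}*_L\mathcal{T}$, the product Moore–Penrose inverse of $\mathcal{A}$ is $\mathcal{A}_{\pi\dagger}=\mathcal{T}^{\dagger}*_L(\mathcal{R}^{\dagger}*_N\mathcal{A}*_M\mathcal{T}^{\dagger})^{\dagger}*_K\mathcal{R}^{\dagger}$.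 *)

theory Defs
  imports Complex_Main
begin

text \<open>A tensor in C^(I_1 x ... x I_N x J_1 x ... x J_M) is represented as a function of
  two multi-indices (row multi-index of length N, column multi-index of length M),
  which vanishes outside the valid index range.\<close>

type_synonym tensor = "nat list \<Rightarrow> nat list \<Rightarrow> complex"

definition idx :: "nat list \<Rightarrow> nat list set" where
  "idx ds = {is. length is = length ds \<and> (\<forall>k<length ds. is ! k < ds ! k)}"

definition tensors :: "nat list \<Rightarrow> nat list \<Rightarrow> tensor set" where
  "tensors Is Js = {A. \<forall>i j. (i \<notin> idx Is \<or> j \<notin> idx Js) \<longrightarrow> A i j = 0}"

definition ein :: "nat list \<Rightarrow> tensor \<Rightarrow> tensor \<Rightarrow> tensor" where
  "ein Ks A B = (\<lambda>i j. \<Sum>k\<in>idx Ks. A i k * B k j)"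

definition ctrans :: "tensor \<Rightarrow> tensor" where
  "ctrans A = (\<lambda>j i. cnj (A i j))"

definition mp :: "nat list \<Rightarrow> nat list \<Rightarrow> tensor \<Rightarrow> tensor" where
  "mp Is Js A = (THE X. X \<in> tensors Js Is \<and>
      ein Is (ein Js A X) A = A \<and>
      ein Js (ein Is X A) X = X \<and>
      ctrans (ein Js A X) = ein Js A X \<and>
      ctrans (ein Is X A) = ein Is X A)"

definition pmp :: "nat list \<Rightarrow> nat list \<Rightarrow> nat list \<Rightarrow> nat list \<Rightarrow>
    tensor \<Rightarrow> tensor \<Rightarrow> tensor \<Rightarrow> tensor" where
  "pmp Is Js Hs Gs R S T =
     (let A = ein Gs (ein Hs R S) T;
          Rd = mp Is Hs R;
          Td = mp Gs Js T
      in ein Hs (ein Gs Td (mp Hs Gs (ein Js (ein Is Rd A) Td))) Rd)"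

end

theory Submission
  imports Defs "HOL-Library.Function_Algebras"
begin

lemma finite_idx: "finite (idx ds)"
proof -
  define m where "m = Suc (Max (insert 0 (set ds)))"
  have "idx ds \<subseteq> {xs. set xs \<subseteq> {..<m} \<and> length xs = length ds}"
  proof
    fix xs assume "xs \<in> idx ds"
    then have l: "length xs = length ds" and b: "\<forall>k<length ds. xs ! k < ds ! k"
      unfolding idx_def by auto
    have "set xs \<subseteq> {..<m}"
    proof
      fix x assume "x \<in> set xs"
      then obtain k where k: "k < length xs" "xs ! k = x" by (auto simp: in_set_conv_nth)
      have "ds ! k \<in> set ds" using k l by auto
      then have "ds ! k \<le> Max (insert 0 (set ds))" by simp
      moreover have "x < ds ! k" using b k l by auto
      ultimately show "x \<in> {..<m}" unfolding m_def by simp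
    qed
    then show "xs \<in> {xs. set xs \<subseteq> {..<m} \<and> length xs = length ds}" using l by simp
  qed
  moreover have "finite {xs. set xs \<subseteq> {..<m} \<and> length xs = length ds}"
    by (rule finite_lists_length_eq) simp
  ultimately show ?thesis by (rule finite_subset)
qed

lemma ein_assoc: "ein L (ein K A B) C = ein K A (ein L B C)"
  unfolding ein_def
  by (auto intro!: ext simp: sum_distrib_left sum_distrib_right mult.assoc intro: sum.swap)

lemma ctrans_ein: "ctrans (ein K A B) = ein K (ctrans B) (ctrans A)"
  unfolding ein_def ctrans_def by (auto intro!: ext simp: mult.commute)

lemma ctrans_ctrans[simp]: "ctrans (ctrans A) = A"
  unfolding ctrans_def by simp

lemma tensorsI: "(\<And>i j. i \<notin> idx I \<or> j \<notin> idx J \<Longrightarrow> A i j = 0) \<Longrightarrow> A \<in> tensors I J"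
  unfolding tensors_def by auto

lemma tensorsD1: "A \<in> tensors I J \<Longrightarrow> i \<notin> idx I \<Longrightarrow> A i j = 0"
  unfolding tensors_def by auto
lemma tensorsD2: "A \<in> tensors I J \<Longrightarrow> j \<notin> idx J \<Longrightarrow> A i j = 0"
  unfolding tensors_def by auto

lemma ein_tensors: "A \<in> tensors I K \<Longrightarrow> B \<in> tensors K J \<Longrightarrow> ein K A B \<in> tensors I J"
  unfolding ein_def by (rule tensorsI) (auto simp: tensorsD1 tensorsD2)

lemma ctrans_tensors: "A \<in> tensors I J \<Longrightarrow> ctrans A \<in> tensors J I"
  unfolding ctrans_def by (rule tensorsI) (auto simp: tensorsD1 tensorsD2)

lemma ein_diff_right: "ein K A (\<lambda>i j. B i j - C i j) = (\<lambda>i j. ein K A B i j - ein K A C i j)"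
  unfolding ein_def by (auto intro!: ext simp: right_diff_distrib sum_subtractf)
lemma ein_diff_left: "ein K (\<lambda>i j. B i j - C i j) A = (\<lambda>i j. ein K B A i j - ein K C A i j)"
  unfolding ein_def by (auto intro!: ext simp: left_diff_distrib sum_subtractf)
lemma ein_add_right: "ein K A (\<lambda>i j. B i j + C i j) = (\<lambda>i j. ein K A B i j + ein K A C i j)"
  unfolding ein_def by (auto intro!: ext simp: distrib_left sum.distrib)
lemma ein_add_left: "ein K (\<lambda>i j. B i j + C i j) A = (\<lambda>i j. ein K B A i j + ein K C A i j)"
  unfolding ein_def by (auto intro!: ext simp: distrib_right sum.distrib)
lemma ein_zero_right[simp]: "ein K A (\<lambda>i j. 0) = (\<lambda>i j. 0)"
  unfolding ein_def by simp
lemma ein_zero_left[simp]: "ein K (\<lambda>i j. 0) A = (\<lambda>i j. 0)"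
  unfolding ein_def by simp
lemma ctrans_diff: "ctrans (\<lambda>i j. B i j - C i j) = (\<lambda>i j. ctrans B i j - ctrans C i j)"
  unfolding ctrans_def by simp
lemma ctrans_zero[simp]: "ctrans (\<lambda>i j. 0) = (\<lambda>i j. 0)"
  unfolding ctrans_def by simp

lemma ein_sum_right: "ein K A (\<lambda>i j. \<Sum>x\<in>S. c x * F x i j) = (\<lambda>i j. \<Sum>x\<in>S. c x * ein K A (F x) i j)"
  unfolding ein_def by (auto intro!: ext simp: sum_distrib_left mult.left_commute intro: sum.swap)
lemma ein_sum_left: "ein K (\<lambda>i j. \<Sum>x\<in>S. c x * F x i j) A = (\<lambda>i j. \<Sum>x\<in>S. c x * ein K (F x) A i j)"
  unfolding ein_def by (auto intro!: ext simp: sum_distrib_left sum_distrib_right mult.assoc intro: sum.swap)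

lemma sum_tensors: assumes F: "\<And>x. F x \<in> tensors I J"
  shows "(\<lambda>i j. \<Sum>x\<in>S. c x * F x i j) \<in> tensors I J"
  by (rule tensorsI) (auto simp: tensorsD1[OF F] tensorsD2[OF F])

lemma cancel0:
  assumes A: "A \<in> tensors I J" and z: "ein I (ctrans A) A = (\<lambda>i j. 0)"
  shows "A = (\<lambda>i j. 0)"
proof (intro ext)
  fix i j
  show "A i j = 0"
  proof (cases "i \<in> idx I \<and> j \<in> idx J")
    case True
    have "(\<Sum>k\<in>idx I. cnj (A k j) * A k j) = 0" using fun_cong[OF fun_cong[OF z, of j], of j]
      unfolding ein_def ctrans_def by simp
    moreover have "(\<Sum>k\<in>idx I. cnj (A k j) * A k j) = (\<Sum>k\<in>idx I. of_real ((cmod (A k j))^2))"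
      by (rule sum.cong) (simp_all only: complex_norm_square mult.commute)
    moreover have "(\<Sum>k\<in>idx I. of_real ((cmod (A k j))^2)) = (of_real (\<Sum>k\<in>idx I. (cmod (A k j))^2) :: complex)"
      by (simp only: of_real_sum)
    ultimately have "(\<Sum>k\<in>idx I. (cmod (A k j))^2) = 0" by (metis of_real_eq_0_iff)
    then have "\<forall>k\<in>idx I. (cmod (A k j))^2 = 0"
      by (subst (asm) sum_nonneg_eq_0_iff) (auto simp: finite_idx)
    then show ?thesis using True by auto
  next
    case False then show ?thesis using A by (auto simp: tensorsD1 tensorsD2)
  qed
qed

lemma cancel0':
  assumes A: "A \<in> tensors I J" and z: "ein J A (ctrans A) = (\<lambda>i j. 0)"
  shows "A = (\<lambda>i j. 0)"
proof -
  have "ctrans A = (\<lambda>i j. 0)" using cancel0[OF ctrans_tensors[OF A]] z by simp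
  then have "ctrans (ctrans A) = (\<lambda>i j. 0)" by simp
  then show ?thesis by simp
qed

lemma herm_red:
  assumes B: "B \<in> tensors J J" and h: "ctrans B = B" and W: "W \<in> tensors J Q"
    and z: "ein J B (ein J B W) = (\<lambda>i j. 0)"
  shows "ein J B W = (\<lambda>i j. 0)"
proof -
  let ?V = "ein J B W"
  have V: "?V \<in> tensors J Q" using ein_tensors[OF B W] .
  have "ein J (ctrans ?V) ?V = ein J (ein J (ctrans W) (ctrans B)) ?V" by (simp add: ctrans_ein)
  also have "\<dots> = ein J (ctrans W) (ein J B ?V)" by (simp add: h ein_assoc)
  also have "\<dots> = (\<lambda>i j. 0)" using z by simp
  finally show ?thesis using cancel0[OF V] by blast
qed

lemma cancel_gram:
  assumes A: "A \<in> tensors Is Js" and U: "U \<in> tensors Js Js"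
    and e: "ein Js U (ein Is (ctrans A) A) = ein Is (ctrans A) A"
  shows "ein Js U (ctrans A) = ctrans A"
proof -
  define D where "D = (\<lambda>i j. ein Js U (ctrans A) i j - ctrans A i j)"
  have D: "D \<in> tensors Js Is" unfolding D_def
    using ein_tensors[OF U ctrans_tensors[OF A]] ctrans_tensors[OF A]
    by (intro tensorsI) (auto simp: tensorsD1[OF ein_tensors[OF U ctrans_tensors[OF A]]] tensorsD2[OF ein_tensors[OF U ctrans_tensors[OF A]]] tensorsD1[OF ctrans_tensors[OF A]] tensorsD2[OF ctrans_tensors[OF A]])
  have DA: "ein Is D A = (\<lambda>i j. 0)"
    unfolding D_def ein_diff_left using e by (simp add: ein_assoc)
  have cD: "ctrans D = (\<lambda>i j. ein Js A (ctrans U) i j - A i j)"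
    unfolding D_def ctrans_diff by (simp add: ctrans_ein)
  have "ein Is D (ctrans D) = (\<lambda>i j. 0)"
    unfolding cD ein_diff_right by (simp add: ein_assoc[symmetric] DA)
  then have "D = (\<lambda>i j. 0)" using cancel0'[OF D] by blast
  then have "\<And>i j. D i j = 0" by simp
  then show ?thesis unfolding D_def by (intro ext) simp
qed

definition idt :: "nat list \<Rightarrow> tensor" where
  "idt Js = (\<lambda>i j. if i \<in> idx Js \<and> i = j then 1 else 0)"

lemma idt_tensors: "idt Js \<in> tensors Js Js"
  unfolding idt_def by (auto intro!: tensorsI)

lemma ein_idt_left: assumes X: "X \<in> tensors Js Q" shows "ein Js (idt Js) X = X"
proof (intro ext)
  fix i j
  have "ein Js (idt Js) X i j = (\<Sum>k\<in>idx Js. if i = k then X k j else 0)"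
    unfolding ein_def idt_def by (rule sum.cong) (auto simp: tensorsD1[OF X])
  also have "\<dots> = X i j" by (simp add: finite_idx tensorsD1[OF X])
  finally show "ein Js (idt Js) X i j = X i j" .
qed

lemma ein_idt_right: assumes X: "X \<in> tensors P Js" shows "ein Js X (idt Js) = X"
proof (intro ext)
  fix i j
  have "ein Js X (idt Js) i j = (\<Sum>k\<in>idx Js. if k = j then X i k else 0)"
    unfolding ein_def idt_def by (rule sum.cong) (auto simp: tensorsD2[OF X])
  also have "\<dots> = X i j" by (simp add: finite_idx tensorsD2[OF X])
  finally show "ein Js X (idt Js) i j = X i j" .
qed

lemma sum_apply2: "(sum f S) i j = (\<Sum>x\<in>S. f x i j)"
  by (induction S rule: infinite_finite_induct) (auto simp: plus_fun_def zero_fun_def)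

lemma tensor_dep:
  fixes F :: "nat \<Rightarrow> tensor"
  assumes F: "\<And>k. F k \<in> tensors I J"
  shows "\<exists>n a. (\<exists>k\<le>n. a k \<noteq> 0) \<and> (\<forall>i j. (\<Sum>k\<le>n. a k * F k i j) = 0)"
proof -
  interpret vs: vector_space "\<lambda>(c::complex) (f::tensor). (\<lambda>i j. c * f i j)"
    by unfold_locales (auto simp: plus_fun_def distrib_left distrib_right mult.assoc)
  define e where "e = (\<lambda>a b. (\<lambda>i j. if i = a \<and> j = b then 1 else 0) :: tensor)"
  define E where "E = (\<lambda>p. e (fst p) (snd p)) ` (idx I \<times> idx J)"
  have finE: "finite E" unfolding E_def by (simp add: finite_idx)
  have span: "F k \<in> vs.span E" for k
  proof -
    have eq: "F k = (\<Sum>p\<in>idx I \<times> idx J. (\<lambda>i j. F k (fst p) (snd p) * e (fst p) (snd p) i j))"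
    proof (intro ext)
      fix i j
      have "(\<Sum>p\<in>idx I \<times> idx J. (\<lambda>i j. F k (fst p) (snd p) * e (fst p) (snd p) i j)) i j
          = (\<Sum>p\<in>idx I \<times> idx J. if p = (i, j) then F k i j else 0)"
        unfolding sum_apply2 e_def by (rule sum.cong) auto
      also have "\<dots> = F k i j"
        using F[of k] by (auto simp: finite_idx tensorsD1 tensorsD2)
      finally show "F k i j = (\<Sum>p\<in>idx I \<times> idx J. (\<lambda>i j. F k (fst p) (snd p) * e (fst p) (snd p) i j)) i j" by simp
    qed
    show ?thesis
      by (subst eq, rule vs.span_sum, rule vs.span_scale, rule vs.span_base) (auto simp: E_def)
  qed
  define N where "N = card E"
  show ?thesis
  proof (cases "inj_on F {..N}")
    case True
    let ?S = "F ` {..N}"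
    have cS: "card ?S = Suc N" using True by (simp add: card_image)
    have "vs.dependent ?S"
    proof (rule ccontr)
      assume "\<not> vs.dependent ?S"
      then have "card ?S \<le> card E" using vs.independent_span_bound[OF finE, of ?S] span by auto
      then show False using cS N_def by simp
    qed
    then have "\<exists>u. (\<exists>v\<in>?S. u v \<noteq> 0) \<and> (\<Sum>v\<in>?S. (\<lambda>i j. u v * v i j)) = 0"
      using vs.dependent_finite[of ?S] by simp
    then obtain u :: "tensor \<Rightarrow> complex" where u: "\<exists>v\<in>?S. u v \<noteq> 0" "(\<Sum>v\<in>?S. (\<lambda>i j. u v * v i j)) = 0"
      by blast
    show ?thesis
    proof (rule exI[of _ N], rule exI[of _ "\<lambda>k. u (F k)"], intro conjI allI)
      show "\<exists>k\<le>N. u (F k) \<noteq> 0" using u(1) by auto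
      fix i j
      have "(\<Sum>k\<le>N. u (F k) * F k i j) = (\<Sum>v\<in>?S. (\<lambda>i j. u v * v i j)) i j"
        unfolding sum_apply2 by (subst sum.reindex[OF True]) simp
      also have "\<dots> = 0" using u(2) by simp
      finally show "(\<Sum>k\<le>N. u (F k) * F k i j) = 0" .
    qed
  next
    case False
    then obtain p q where pq: "p \<le> N" "q \<le> N" "p \<noteq> q" "F p = F q"
      unfolding inj_on_def by auto
    define a where "a = (\<lambda>k. if k = p then 1 else if k = q then -1 else (0::complex))"
    show ?thesis
    proof (rule exI[of _ N], rule exI[of _ a], intro conjI allI)
      show "\<exists>k\<le>N. a k \<noteq> 0" using pq by (auto simp: a_def)
      fix i j
      have "(\<Sum>k\<le>N. a k * F k i j) = (\<Sum>k\<le>N. (if k = p then F k i j else 0) - (if k = q then F k i j else 0))"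
        by (rule sum.cong) (auto simp: a_def pq)
      also have "\<dots> = 0" using pq by (simp add: sum_subtractf)
      finally show "(\<Sum>k\<le>N. a k * F k i j) = 0" .
    qed
  qed
qed

fun pw :: "nat list \<Rightarrow> tensor \<Rightarrow> nat \<Rightarrow> tensor" where
  "pw Js B 0 = idt Js"
| "pw Js B (Suc n) = ein Js B (pw Js B n)"

lemma pw_tensors: "B \<in> tensors Js Js \<Longrightarrow> pw Js B n \<in> tensors Js Js"
  by (induction n) (auto simp: idt_tensors ein_tensors)

lemma pw_1: "B \<in> tensors Js Js \<Longrightarrow> pw Js B (Suc 0) = B"
  by (simp add: ein_idt_right)

lemma pw_add: assumes B: "B \<in> tensors Js Js" shows "ein Js (pw Js B m) (pw Js B n) = pw Js B (m + n)"
proof (induction m)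
  case 0 show ?case using ein_idt_left[OF pw_tensors[OF B]] by simp
next
  case (Suc m) then show ?case by (simp add: ein_assoc)
qed

lemma pw_comm: assumes B: "B \<in> tensors Js Js" shows "ein Js (pw Js B n) B = pw Js B (Suc n)"
proof -
  have "ein Js (pw Js B n) (pw Js B (Suc 0)) = pw Js B (n + Suc 0)" by (rule pw_add[OF B])
  then show ?thesis unfolding pw_1[OF B] by simp
qed

lemma pw_red:
  assumes B: "B \<in> tensors J J" and h: "ctrans B = B" and W: "W \<in> tensors J Q"
  shows "ein J (pw J B (Suc m)) W = (\<lambda>i j. 0) \<Longrightarrow> ein J B W = (\<lambda>i j. 0)"
proof (induction m)
  case 0 then show ?case using pw_1[OF B] by simp
next
  case (Suc m)
  let ?W = "ein J (pw J B m) W"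
  have W': "?W \<in> tensors J Q" by (rule ein_tensors[OF pw_tensors[OF B] W])
  have "ein J B (ein J B ?W) = ein J (pw J B (Suc (Suc m))) W" by (simp add: ein_assoc)
  then have "ein J B ?W = (\<lambda>i j. 0)" using herm_red[OF B h W'] Suc.prems by simp
  then have "ein J (pw J B (Suc m)) W = (\<lambda>i j. 0)" by (simp add: ein_assoc)
  then show ?case by (rule Suc.IH)
qed

lemma exists_T:
  assumes B: "B \<in> tensors Js Js" and h: "ctrans B = B"
  shows "\<exists>T \<in> tensors Js Js. ein Js (ein Js T B) B = B"
proof -
  obtain n a where a: "\<exists>k\<le>n. a k \<noteq> 0" "\<forall>i j. (\<Sum>k\<le>n. a k * pw Js B k i j) = 0"
    using tensor_dep[of "pw Js B" Js Js] pw_tensors[OF B] by blast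
  define r where "r = (LEAST k. a k \<noteq> 0)"
  have ar: "a r \<noteq> 0" unfolding r_def using a(1) by (metis (mono_tags) LeastI)
  have rn: "r \<le> n" unfolding r_def using a(1) by (meson Least_le order.trans)
  have below: "\<And>k. k < r \<Longrightarrow> a k = 0" unfolding r_def using not_less_Least by blast
  have rel: "a r * pw Js B r i j + (\<Sum>k\<in>{Suc r..n}. a k * pw Js B k i j) = 0" for i j
  proof -
    have "(\<Sum>k\<le>n. a k * pw Js B k i j) = (\<Sum>k\<in>{r..n}. a k * pw Js B k i j)"
      by (rule sum.mono_neutral_right) (auto simp: below)
    also have "\<dots> = a r * pw Js B r i j + (\<Sum>k\<in>{Suc r..n}. a k * pw Js B k i j)"
      using rn by (simp add: sum.atLeast_Suc_atMost)
    finally show ?thesis using a(2) by simp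
  qed
  define P where "P = (\<lambda>i j. \<Sum>k\<in>{Suc r..n}. (- a k / a r) * pw Js B (k - Suc r) i j)"
  have Pt: "P \<in> tensors Js Js" unfolding P_def by (rule sum_tensors[OF pw_tensors[OF B]])
  have prP: "ein Js (pw Js B (Suc r)) P = pw Js B r"
  proof (intro ext)
    fix i j
    have "ein Js (pw Js B (Suc r)) P i j = (\<Sum>k\<in>{Suc r..n}. (- a k / a r) * pw Js B k i j)"
      unfolding P_def ein_sum_right
      by (rule sum.cong[OF refl], subst pw_add[OF B]) simp
    also have "\<dots> = - (\<Sum>k\<in>{Suc r..n}. a k * pw Js B k i j) / a r"
      by (simp add: sum_divide_distrib sum_negf)
    also have "\<dots> = pw Js B r i j" using rel[of i j] ar
      by (simp add: field_simps add_eq_0_iff)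
    finally show "ein Js (pw Js B (Suc r)) P i j = pw Js B r i j" .
  qed
  have comm: "ein Js B P = ein Js P B"
    unfolding P_def ein_sum_right ein_sum_left
    using pw_comm[OF B] by simp
  define W where "W = (\<lambda>i j. idt Js i j - ein Js B P i j)"
  have Wt: "W \<in> tensors Js Js" unfolding W_def using idt_tensors ein_tensors[OF B Pt]
    by (intro tensorsI) (auto simp: tensorsD1[OF idt_tensors] tensorsD2[OF idt_tensors]
        tensorsD1[OF ein_tensors[OF B Pt]] tensorsD2[OF ein_tensors[OF B Pt]])
  have rW: "ein Js (pw Js B r) W = (\<lambda>i j. 0)"
  proof -
    have "ein Js (pw Js B r) (ein Js B P) = pw Js B r"
      using prP pw_comm[OF B, of r] by (simp add: ein_assoc[symmetric])
    then show ?thesis unfolding W_def ein_diff_right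
      by (simp add: ein_idt_right[OF pw_tensors[OF B]])
  qed
  have BW: "ein Js B W = (\<lambda>i j. 0)"
  proof (cases r)
    case 0
    then have "W = (\<lambda>i j. 0)" using rW by (simp add: ein_idt_left[OF Wt])
    then show ?thesis by simp
  next
    case (Suc m)
    then show ?thesis using pw_red[OF B h Wt] rW by simp
  qed
  have BBP: "ein Js B (ein Js B P) = B"
  proof -
    have "(\<lambda>i j. B i j - ein Js B (ein Js B P) i j) = (\<lambda>i j. 0)"
      using BW unfolding W_def ein_diff_right by (simp add: ein_idt_right[OF B])
    then have "\<And>i j. B i j - ein Js B (ein Js B P) i j = 0" by metis
    then show ?thesis by (intro ext) simp
  qed
  show ?thesis
  proof (rule bexI[OF _ Pt])
    have "ein Js (ein Js P B) B = ein Js (ein Js B P) B" using comm by simp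
    also have "\<dots> = ein Js B (ein Js P B)" by (rule ein_assoc)
    also have "\<dots> = B" using BBP comm by simp
    finally show "ein Js (ein Js P B) B = B" .
  qed
qed

lemma gen_inv:
  assumes A: "A \<in> tensors Is Js"
  shows "\<exists>X \<in> tensors Js Is. ein Js (ein Is X A) (ctrans A) = ctrans A"
proof -
  define B where "B = ein Is (ctrans A) A"
  have Bt: "B \<in> tensors Js Js" unfolding B_def by (rule ein_tensors[OF ctrans_tensors[OF A] A])
  have hB: "ctrans B = B" unfolding B_def by (simp add: ctrans_ein)
  obtain T where Tt: "T \<in> tensors Js Js" and TB: "ein Js (ein Js T B) B = B"
    using exists_T[OF Bt hB] by blast
  have Ut: "ein Js T B \<in> tensors Js Js" by (rule ein_tensors[OF Tt Bt])
  have "ein Js (ein Js T B) (ctrans A) = ctrans A"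
    by (rule cancel_gram[OF A Ut]) (use TB in \<open>simp add: B_def\<close>)
  moreover have "ein Is (ein Js T (ctrans A)) A = ein Js T B"
    unfolding B_def by (rule ein_assoc)
  ultimately show ?thesis
    by (intro bexI[of _ "ein Js T (ctrans A)"]) (auto intro: ein_tensors[OF Tt ctrans_tensors[OF A]])
qed

definition pen :: "nat list \<Rightarrow> nat list \<Rightarrow> tensor \<Rightarrow> tensor \<Rightarrow> bool" where
  "pen Is Js A X \<longleftrightarrow> ein Is (ein Js A X) A = A \<and>
      ein Js (ein Is X A) X = X \<and>
      ctrans (ein Js A X) = ein Js A X \<and>
      ctrans (ein Is X A) = ein Is X A"

lemma mp_exists:
  assumes A: "A \<in> tensors Is Js"
  shows "\<exists>Z \<in> tensors Js Is. pen Is Js A Z"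
proof -
  obtain X where Xt: "X \<in> tensors Js Is" and XAA: "ein Js (ein Is X A) (ctrans A) = ctrans A"
    using gen_inv[OF A] by blast
  define M where "M = ein Is X A"
  have h1: "ein Js A (ctrans M) = A"
  proof -
    have "ctrans (ein Js (ein Is X A) (ctrans A)) = ctrans (ctrans A)" using XAA by simp
    then show ?thesis unfolding M_def by (simp add: ctrans_ein)
  qed
  have MM: "M = ein Js M (ctrans M)"
  proof -
    have "M = ein Is X (ein Js A (ctrans M))" using h1 unfolding M_def by simp
    also have "\<dots> = ein Js M (ctrans M)" unfolding M_def by (rule ein_assoc[symmetric])
    finally show ?thesis .
  qed
  have hM: "ctrans M = M"
  proof -
    have "ctrans M = ctrans (ein Js M (ctrans M))" using MM by simp
    also have "\<dots> = ein Js M (ctrans M)" by (simp add: ctrans_ein)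
    finally show ?thesis using MM by simp
  qed
  have AM: "ein Js A M = A" using h1 hM by simp
  obtain X' where X't: "X' \<in> tensors Is Js"
    and X'AA: "ein Is (ein Js X' (ctrans A)) (ctrans (ctrans A)) = ctrans (ctrans A)"
    using gen_inv[OF ctrans_tensors[OF A]] by blast
  define W where "W = ctrans X'"
  have Wt: "W \<in> tensors Js Is" unfolding W_def by (rule ctrans_tensors[OF X't])
  define N where "N = ein Js A W"
  have h2: "ein Is (ctrans A) N = ctrans A"
  proof -
    have "ctrans (ein Is (ein Js X' (ctrans A)) A) = ctrans A" using X'AA by simp
    then show ?thesis unfolding N_def W_def by (simp add: ctrans_ein)
  qed
  have NN: "ctrans N = ein Is (ctrans N) N"
  proof -
    have "ctrans N = ein Js (ctrans W) (ctrans A)" unfolding N_def by (simp add: ctrans_ein)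
    also have "\<dots> = ein Js (ctrans W) (ein Is (ctrans A) N)" using h2 by simp
    also have "\<dots> = ein Is (ein Js (ctrans W) (ctrans A)) N" by (rule ein_assoc[symmetric])
    also have "\<dots> = ein Is (ctrans N) N" unfolding N_def by (simp add: ctrans_ein)
    finally show ?thesis .
  qed
  have hN: "ctrans N = N"
  proof -
    have "N = ctrans (ctrans N)" by simp
    also have "\<dots> = ctrans (ein Is (ctrans N) N)" using NN by simp
    also have "\<dots> = ein Is (ctrans N) N" by (simp add: ctrans_ein)
    finally show ?thesis using NN by simp
  qed
  have NA: "ein Is N A = A"
  proof -
    have "ctrans (ein Is (ctrans A) N) = A" using h2 by simp
    then have "ein Is (ctrans N) A = A" by (simp add: ctrans_ein)
    then show ?thesis using hN by simp
  qed
  define Z where "Z = ein Js M W"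
  have Zt: "Z \<in> tensors Js Is" unfolding Z_def M_def
    by (rule ein_tensors[OF ein_tensors[OF Xt A] Wt])
  have AZ: "ein Js A Z = N"
    unfolding Z_def N_def using AM by (simp add: ein_assoc[symmetric])
  have ZA: "ein Is Z A = M"
  proof -
    have "ein Is Z A = ein Is X (ein Is (ein Js A W) A)"
      unfolding Z_def M_def by (simp add: ein_assoc)
    also have "\<dots> = M" using NA unfolding N_def M_def by simp
    finally show ?thesis .
  qed
  have MMM: "ein Js M M = M"
  proof -
    have "ein Js M M = ein Is X (ein Js A M)" unfolding M_def by (rule ein_assoc)
    then show ?thesis using AM unfolding M_def by simp
  qed
  have "pen Is Js A Z"
    unfolding pen_def
  proof (intro conjI)
    show "ein Is (ein Js A Z) A = A" using AZ NA by simp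
    show "ein Js (ein Is Z A) Z = Z" using ZA MMM unfolding Z_def by (simp add: ein_assoc[symmetric])
    show "ctrans (ein Js A Z) = ein Js A Z" using AZ hN by simp
    show "ctrans (ein Is Z A) = ein Is Z A" using ZA hM by simp
  qed
  then show ?thesis using Zt by blast
qed

lemma mp_unique:
  assumes X: "pen Is Js A X" and Y: "pen Is Js A Y"
  shows "X = Y"
proof -
  from X have X1: "ein Is (ein Js A X) A = A" and X2: "ein Js (ein Is X A) X = X"
    and X3: "ctrans (ein Js A X) = ein Js A X" and X4: "ctrans (ein Is X A) = ein Is X A"
    unfolding pen_def by auto
  from Y have Y1: "ein Is (ein Js A Y) A = A" and Y2: "ein Js (ein Is Y A) Y = Y"
    and Y3: "ctrans (ein Js A Y) = ein Js A Y" and Y4: "ctrans (ein Is Y A) = ein Is Y A"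
    unfolding pen_def by auto
  have Xa: "X = ein Is X (ein Js (ctrans X) (ctrans A))"
  proof -
    have "X = ein Is X (ein Js A X)" using X2 by (simp add: ein_assoc)
    also have "\<dots> = ein Is X (ctrans (ein Js A X))" using X3 by simp
    finally show ?thesis by (simp add: ctrans_ein)
  qed
  have Ah1: "ctrans A = ein Is (ctrans A) (ein Js A Y)"
  proof -
    have "ctrans A = ctrans (ein Is (ein Js A Y) A)" using Y1 by simp
    also have "\<dots> = ein Is (ctrans A) (ctrans (ein Js A Y))" by (simp add: ctrans_ein)
    finally show ?thesis using Y3 by simp
  qed
  have XY: "X = ein Is X (ein Js A Y)"
  proof -
    have "X = ein Is X (ein Js (ctrans X) (ein Is (ctrans A) (ein Js A Y)))"
      using Xa Ah1 by simp
    also have "\<dots> = ein Is (ein Is X (ein Js (ctrans X) (ctrans A))) (ein Js A Y)"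
      by (simp add: ein_assoc)
    also have "\<dots> = ein Is X (ein Js A Y)" using Xa[symmetric] by simp
    finally show ?thesis .
  qed
  have Ya: "Y = ein Js (ein Is (ctrans A) (ctrans Y)) Y"
  proof -
    have "Y = ein Js (ctrans (ein Is Y A)) Y" using Y2 Y4 by simp
    then show ?thesis by (simp add: ctrans_ein)
  qed
  have Ah2: "ctrans A = ein Js (ein Is X A) (ctrans A)"
  proof -
    have "ctrans A = ctrans (ein Js A (ein Is X A))" using X1 by (simp add: ein_assoc)
    also have "\<dots> = ein Js (ctrans (ein Is X A)) (ctrans A)" by (simp add: ctrans_ein)
    finally show ?thesis using X4 by simp
  qed
  have YX: "Y = ein Is X (ein Js A Y)"
  proof -
    have "Y = ein Js (ein Is (ein Js (ein Is X A) (ctrans A)) (ctrans Y)) Y"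
      using Ya Ah2 by simp
    also have "\<dots> = ein Js (ein Is X A) (ein Js (ein Is (ctrans A) (ctrans Y)) Y)"
      by (simp add: ein_assoc)
    also have "\<dots> = ein Js (ein Is X A) Y" using Ya[symmetric] by simp
    also have "\<dots> = ein Is X (ein Js A Y)" by (rule ein_assoc)
    finally show ?thesis .
  qed
  show ?thesis using XY YX by simp
qed

lemma mp_props:
  assumes A: "A \<in> tensors Is Js"
  shows "mp Is Js A \<in> tensors Js Is \<and> pen Is Js A (mp Is Js A)"
proof -
  obtain Z where Zt: "Z \<in> tensors Js Is" and Zp: "pen Is Js A Z" using mp_exists[OF A] by blast
  have "mp Is Js A = Z"
    unfolding mp_def
  proof (rule the_equality)
    show "Z \<in> tensors Js Is \<and> ein Is (ein Js A Z) A = A \<and> ein Js (ein Is Z A) Z = Z \<and>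
        ctrans (ein Js A Z) = ein Js A Z \<and> ctrans (ein Is Z A) = ein Is Z A"
      using Zt Zp unfolding pen_def by blast
  next
    fix X assume "X \<in> tensors Js Is \<and> ein Is (ein Js A X) A = A \<and> ein Js (ein Is X A) X = X \<and>
        ctrans (ein Js A X) = ein Js A X \<and> ctrans (ein Is X A) = ein Is X A"
    then have "pen Is Js A X" unfolding pen_def by blast
    then show "X = Z" using mp_unique Zp by blast
  qed
  then show ?thesis using Zt Zp by simp
qed

lemma mp_tensors: "A \<in> tensors Is Js \<Longrightarrow> mp Is Js A \<in> tensors Js Is"
  using mp_props by blast

theorem theorem3p11:
  fixes Is Js Hs Gs :: "nat list" and R S T :: tensor
  assumes "R \<in> tensors Is Hs" and "S \<in> tensors Hs Gs" and "T \<in> tensors Gs Js"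
  shows "pmp Is Js Hs Gs R S T
           = ein Hs (ein Gs (mp Gs Js T) (mp Hs Gs S)) (mp Is Hs R)
         \<longleftrightarrow>
         (\<exists>Y \<in> tensors Gs Hs.
            mp Hs Gs S = (\<lambda>i j. mp Hs Gs (ein Js (ein Is (mp Is Hs R) (ein Gs (ein Hs R S) T))
                                                   (mp Gs Js T)) i j + Y i j)
          \<and> ein Hs (ein Gs (mp Gs Js T) Y) (mp Is Hs R) = (\<lambda>i j. 0))"
proof -
  note Rt = assms(1) and St = assms(2) and Tt = assms(3)
  define Rd where "Rd = mp Is Hs R"
  define Td where "Td = mp Gs Js T"
  define Sd where "Sd = mp Hs Gs S"
  define Aa where "Aa = ein Gs (ein Hs R S) T"
  define C where "C = ein Js (ein Is Rd Aa) Td"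
  define Bd where "Bd = mp Hs Gs C"
  have Rdt: "Rd \<in> tensors Hs Is" unfolding Rd_def by (rule mp_tensors[OF Rt])
  have Tdt: "Td \<in> tensors Js Gs" unfolding Td_def by (rule mp_tensors[OF Tt])
  have Sdt: "Sd \<in> tensors Gs Hs" unfolding Sd_def by (rule mp_tensors[OF St])
  have Aat: "Aa \<in> tensors Is Js" unfolding Aa_def by (rule ein_tensors[OF ein_tensors[OF Rt St] Tt])
  have Ct: "C \<in> tensors Hs Gs" unfolding C_def by (rule ein_tensors[OF ein_tensors[OF Rdt Aat] Tdt])
  have Bdt: "Bd \<in> tensors Gs Hs" unfolding Bd_def by (rule mp_tensors[OF Ct])
  have pm: "pmp Is Js Hs Gs R S T = ein Hs (ein Gs Td Bd) Rd"
    unfolding pmp_def Let_def Bd_def C_def Aa_def Rd_def Td_def ..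
  have "ein Hs (ein Gs Td Bd) Rd = ein Hs (ein Gs Td Sd) Rd \<longleftrightarrow>
     (\<exists>Y \<in> tensors Gs Hs. Sd = (\<lambda>i j. Bd i j + Y i j) \<and> ein Hs (ein Gs Td Y) Rd = (\<lambda>i j. 0))"
  proof
    assume eq: "ein Hs (ein Gs Td Bd) Rd = ein Hs (ein Gs Td Sd) Rd"
    define Y where "Y = (\<lambda>i j. Sd i j - Bd i j)"
    have Yt: "Y \<in> tensors Gs Hs" unfolding Y_def
      by (intro tensorsI) (auto simp: tensorsD1[OF Sdt] tensorsD2[OF Sdt] tensorsD1[OF Bdt] tensorsD2[OF Bdt])
    have "Sd = (\<lambda>i j. Bd i j + Y i j)" unfolding Y_def by simp
    moreover have "ein Hs (ein Gs Td Y) Rd = (\<lambda>i j. 0)"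
      unfolding Y_def ein_diff_right ein_diff_left using eq by simp
    ultimately show "\<exists>Y \<in> tensors Gs Hs. Sd = (\<lambda>i j. Bd i j + Y i j) \<and> ein Hs (ein Gs Td Y) Rd = (\<lambda>i j. 0)"
      using Yt by blast
  next
    assume "\<exists>Y \<in> tensors Gs Hs. Sd = (\<lambda>i j. Bd i j + Y i j) \<and> ein Hs (ein Gs Td Y) Rd = (\<lambda>i j. 0)"
    then obtain Y where Y: "Sd = (\<lambda>i j. Bd i j + Y i j)" "ein Hs (ein Gs Td Y) Rd = (\<lambda>i j. 0)" by blast
    show "ein Hs (ein Gs Td Bd) Rd = ein Hs (ein Gs Td Sd) Rd"
      unfolding Y(1) ein_add_right ein_add_left using Y(2) by simp
  qed
  then show ?thesis unfolding pm Rd_def Td_def Sd_def Bd_def C_def Aa_def .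
qed

end
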